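(* Let $g$ be a positive integer, let $l\ge 1$, and let $(a,a+g)$ be a consecutive prospective prime pair with gap $g$ in $S_l$. Let $k>l$ and let $\mathring{n}_k^g$ denote the number of pairs in $S_k$ derived from $(a,a+g)$, i.e. the number of tuples $(m_{l+1},\dots,m_k)$ of integers with $0\le m_j\le P_j-1$ such that, with $M=\sum_{j=l+1}^{k}m_jP_{j-1}\#$, both $a+M$ and $a+g+M$ are coprime to $P_k\#$. Then \[\mathring{n}_k^g=\prod_{i=l+1}^{k}(P_i-2)\cdot\prod_{\substack{i=l+1\\ P_i\mid g}}^{k}\frac{P_i-1}{P_i-2}.\]
   Context: $P_k$ denotes the $k$-th prime ($P_1=2$) and $P_k\#=\prod_{i=1}^k P_i$. $S_k=\{N\in\mathbb{N}: 5\le N\le 4+P_k\#\}$. A prospective prime in $S_k$ is an $N\in S_k$ with $\gcd(N,P_k\#)=1$. Two prospective primes $a<b$ in $S_k$ are consecutive if no integer strictly between them is coprime to $P_k\#$; a consecutive prospective prime pair with gap $g$ in $S_k$ is a pair $(a,a+g)$ of consecutive prospective primes in $S_k$. *)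

theory Defs
  imports Complex_Main "HOL-Computational_Algebra.Primes" "HOL-Library.Infinite_Set"
begin

text \<open>P k is the k-th prime, 1-indexed: P 1 = 2.\<close>
definition P :: "nat \<Rightarrow> nat" where
  "P k = enumerate {p::nat. prime p} (k - 1)"

definition primorial :: "nat \<Rightarrow> nat" where
  "primorial k = (\<Prod>i\<in>{1..k}. P i)"

definition S :: "nat \<Rightarrow> nat set" where
  "S k = {N. 5 \<le> N \<and> N \<le> 4 + primorial k}"

definition prospective_prime :: "nat \<Rightarrow> nat \<Rightarrow> bool" where
  "prospective_prime k N \<longleftrightarrow> N \<in> S k \<and> coprime N (primorial k)"

definition consec_pair :: "nat \<Rightarrow> nat \<Rightarrow> nat \<Rightarrow> bool" where
  "consec_pair k g a \<longleftrightarrow> 0 < g \<and> prospective_prime k a \<and> prospective_prime k (a + g) \<and>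
     (\<forall>n. a < n \<and> n < a + g \<longrightarrow> \<not> coprime n (primorial k))"

text \<open>Number of derived pairs in S_k: tuples (m_{l+1},...,m_k), encoded as functions
  vanishing outside {l+1..k}.\<close>
definition derived_count :: "nat \<Rightarrow> nat \<Rightarrow> nat \<Rightarrow> nat \<Rightarrow> nat" where
  "derived_count l k g a = card {m :: nat \<Rightarrow> nat.
      (\<forall>j\<in>{l+1..k}. m j \<le> P j - 1) \<and> (\<forall>j. j \<notin> {l+1..k} \<longrightarrow> m j = 0) \<and>
      (let M = (\<Sum>j=l+1..k. m j * primorial (j - 1)) in
        coprime (a + M) (primorial k) \<and> coprime (a + g + M) (primorial k))}"

end

theory Submission
  imports Defs "HOL-Number_Theory.Cong"
begin

lemma primorial_Suc: "primorial (Suc n) = primorial n * P (Suc n)"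
  unfolding primorial_def by (simp add: prod.cl_ivl_Suc)
lemma pc: "prime (p::nat) \<Longrightarrow> coprime y p \<longleftrightarrow> \<not> p dvd y"
  by (metis coprime_commute not_prime_unit prime_imp_coprime coprime_common_divisor dvd_refl)
lemma coprime_add_mult_self: "coprime (y + r * (Q::nat)) Q \<longleftrightarrow> coprime y Q"
  by (metis coprime_iff_gcd_eq_1 gcd.commute gcd_add_mult add.commute)


lemma mod_zero_iff_t:
  fixes p s g :: nat
  assumes "0 < p" "s < p"
  shows "(s + g) mod p = 0 \<longleftrightarrow> s = (p - g mod p) mod p"
proof -
  have gm: "g mod p < p" using assms by simp
  have "(s + g) mod p = (s + g mod p) mod p" by (simp add: mod_add_right_eq)
  moreover have "(s + g mod p) mod p = 0 \<longleftrightarrow> s + g mod p = 0 \<or> s + g mod p = p"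
  proof
    assume "(s + g mod p) mod p = 0"
    then obtain q where q: "s + g mod p = p * q" by (auto simp: dvd_eq_mod_eq_0[symmetric] dvd_def)
    have "p * q < p * 2" using q assms gm by linarith
    then have "q < 2" using mult_less_cancel1 by blast
    then have "q = 0 \<or> q = 1" by auto
    then show "s + g mod p = 0 \<or> s + g mod p = p" using q by auto
  qed auto
  moreover have "(s + g mod p = 0 \<or> s + g mod p = p) \<longleftrightarrow> s = (p - g mod p) mod p"
  proof (cases "g mod p = 0")
    case True then show ?thesis using assms by auto
  next
    case False then show ?thesis using assms gm by auto
  qed
  ultimately show ?thesis by simp
qed

lemma count_res:
  fixes p Q x g :: nat
  assumes p: "prime p" and cop: "coprime Q p"
  shows "card {r\<in>{0..<p}. \<not> p dvd (x + r*Q) \<and> \<not> p dvd (x + g + r*Q)}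
     = (if p dvd g then p - 1 else p - 2)"
proof -
  define h where "h r = (x + r*Q) mod p" for r
  define t where "t = (p - g mod p) mod p"
  have p0: "0 < p" using p prime_gt_0_nat by blast
  have tp: "t < p" unfolding t_def using p0 by simp
  have inj: "inj_on h {0..<p}"
  proof (rule inj_onI)
    fix r1 r2 assume r1: "r1 \<in> {0..<p}" and r2: "r2 \<in> {0..<p}" and e: "h r1 = h r2"
    have "[x + r1*Q = x + r2*Q] (mod p)" using e unfolding h_def cong_def .
    then have "[r1*Q = r2*Q] (mod p)" by (simp add: cong_add_lcancel_nat)
    then have "[r1 = r2] (mod p)" using cop cong_mult_rcancel_nat coprime_commute by metis
    then show "r1 = r2" using r1 r2 by (simp add: cong_def)
  qed
  have himg: "h ` {0..<p} = {0..<p}"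
  proof -
    have "h ` {0..<p} \<subseteq> {0..<p}" unfolding h_def using p0 by auto
    moreover have "card (h ` {0..<p}) = card {0..<p::nat}" using card_image[OF inj] by simp
    ultimately show ?thesis by (simp add: card_subset_eq)
  qed
  have seteq: "{r\<in>{0..<p}. \<not> p dvd (x + r*Q) \<and> \<not> p dvd (x + g + r*Q)}
      = {r\<in>{0..<p}. h r \<notin> {0, t}}"
  proof -
    have "\<And>r. p dvd (x + r*Q) \<longleftrightarrow> h r = 0" unfolding h_def by (simp add: dvd_eq_mod_eq_0)
    moreover have "\<And>r. p dvd (x + g + r*Q) \<longleftrightarrow> h r = t"
    proof -
      fix r
      have "p dvd (x + g + r*Q) \<longleftrightarrow> (h r + g) mod p = 0"
        unfolding h_def by (simp add: dvd_eq_mod_eq_0 mod_add_right_eq ac_simps)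
      also have "\<dots> \<longleftrightarrow> h r = t" unfolding t_def
        by (rule mod_zero_iff_t) (use p0 in \<open>auto simp: h_def\<close>)
      finally show "p dvd (x + g + r*Q) \<longleftrightarrow> h r = t" .
    qed
    ultimately show ?thesis by auto
  qed
  have "h ` {r\<in>{0..<p}. h r \<notin> {0, t}} = {0..<p} - {0, t}"
  proof
    show "h ` {r\<in>{0..<p}. h r \<notin> {0, t}} \<subseteq> {0..<p} - {0, t}"
    proof
      fix y assume "y \<in> h ` {r\<in>{0..<p}. h r \<notin> {0, t}}"
      then obtain r where r: "h r \<notin> {0, t}" "y = h r" by blast
      have "h r < p" unfolding h_def using p0 by simp
      then show "y \<in> {0..<p} - {0, t}" using r by simp
    qed
  next
    show "{0..<p} - {0, t} \<subseteq> h ` {r\<in>{0..<p}. h r \<notin> {0, t}}"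
    proof
      fix y assume y: "y \<in> {0..<p} - {0, t}"
      have "y \<in> h ` {0..<p}" using y himg by simp
      then obtain r where "r \<in> {0..<p}" "y = h r" by blast
      moreover have "h r \<notin> {0, t}" using y \<open>y = h r\<close> by blast
      ultimately show "y \<in> h ` {r\<in>{0..<p}. h r \<notin> {0, t}}" by blast
    qed
  qed
  moreover have "card (h ` {r\<in>{0..<p}. h r \<notin> {0, t}}) = card {r\<in>{0..<p}. h r \<notin> {0, t}}"
    by (rule card_image) (rule inj_on_subset[OF inj], auto)
  ultimately have c: "card {r\<in>{0..<p}. h r \<notin> {0, t}} = p - card {0, t}"
    using tp p0 by (simp add: card_Diff_subset)
  have "t = 0 \<longleftrightarrow> p dvd g"
  proof (cases "g mod p = 0")
    case True then show ?thesis unfolding t_def by (simp add: dvd_eq_mod_eq_0)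
  next
    case False
    have "g mod p < p" using p0 by simp
    then have "0 < p - g mod p" "p - g mod p < p" using False by auto
    then show ?thesis unfolding t_def using False \<open>g mod p < p\<close> by (simp add: dvd_eq_mod_eq_0)
  qed
  then show ?thesis using seteq c by (cases "t = 0") auto
qed


lemma P_prime: "prime (P i)"
  unfolding P_def using enumerate_in_set[of "{p::nat. prime p}"] primes_infinite by simp

lemma P_1: "P 1 = 2"
proof -
  have "(LEAST n::nat. n \<in> {p. prime p}) = 2"
    by (rule Least_equality) (auto simp: prime_ge_2_nat)
  then show ?thesis unfolding P_def by (simp add: enumerate_0)
qed

lemma P_mono: "1 \<le> i \<Longrightarrow> i < j \<Longrightarrow> P i < P j"
  unfolding P_def using strict_mono_enumerate[of "{p::nat. prime p}"] primes_infinite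
  by (simp add: strict_mono_def)

lemma P_ge3: "2 \<le> i \<Longrightarrow> 3 \<le> P i"
  using P_mono[of 1 i] P_1 by simp

lemma coprime_primorial_P: "coprime (primorial n) (P (Suc n))"
  unfolding primorial_def
proof (rule prod_coprime_left)
  fix i assume "i \<in> {1..n}"
  then have "P i < P (Suc n)" using P_mono by auto
  then show "coprime (P i) (P (Suc n))"
    using P_prime primes_coprime by (metis less_irrefl)
qed

lemma coprime_primorial_Suc_iff:
  "coprime y (primorial (Suc n)) \<longleftrightarrow> coprime y (primorial n) \<and> \<not> P (Suc n) dvd y"
  by (simp add: primorial_Suc pc[OF P_prime])

definition Aset :: "nat \<Rightarrow> nat \<Rightarrow> nat \<Rightarrow> nat \<Rightarrow> (nat \<Rightarrow> nat) set" where
  "Aset l k g a = {m :: nat \<Rightarrow> nat.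
      (\<forall>j\<in>{l+1..k}. m j \<le> P j - 1) \<and> (\<forall>j. j \<notin> {l+1..k} \<longrightarrow> m j = 0) \<and>
      (let M = (\<Sum>j=l+1..k. m j * primorial (j - 1)) in
        coprime (a + M) (primorial k) \<and> coprime (a + g + M) (primorial k))}"

definition Msum :: "nat \<Rightarrow> nat \<Rightarrow> (nat \<Rightarrow> nat) \<Rightarrow> nat" where
  "Msum l k m = (\<Sum>j=l+1..k. m j * primorial (j - 1))"

definition cnt :: "nat \<Rightarrow> nat \<Rightarrow> nat" where
  "cnt g i = (if P i dvd g then P i - 1 else P i - 2)"

lemma Aset_iff: "m \<in> Aset l k g a \<longleftrightarrow>
   (\<forall>j\<in>{l+1..k}. m j \<le> P j - 1) \<and> (\<forall>j. j \<notin> {l+1..k} \<longrightarrow> m j = 0) \<and>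
   coprime (a + Msum l k m) (primorial k) \<and> coprime (a + g + Msum l k m) (primorial k)"
  unfolding Aset_def Msum_def by (simp add: Let_def)

lemma Msum_Suc: "l \<le> n \<Longrightarrow> Msum l (Suc n) m = Msum l n m + m (Suc n) * primorial n"
  unfolding Msum_def by (simp add: sum.cl_ivl_Suc)

lemma Msum_upd: "Msum l n (m(Suc n := r)) = Msum l n m"
  unfolding Msum_def by (rule sum.cong) auto

lemma Aset_Suc_iff:
  assumes "1 \<le> l" "l \<le> n"
  defines "p \<equiv> P (Suc n)" and "Q \<equiv> primorial n"
  shows "m \<in> Aset l (Suc n) g a \<longleftrightarrow> m(Suc n := 0) \<in> Aset l n g a \<and>
     m (Suc n) \<in> {r\<in>{0..<p}. \<not> p dvd (a + Msum l n (m(Suc n := 0)) + r*Q) \<and>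
                               \<not> p dvd (a + Msum l n (m(Suc n := 0)) + g + r*Q)}"
proof -
  have p3: "3 \<le> p" unfolding p_def using P_ge3 assms(1,2) by simp
  have ms: "Msum l n (m(Suc n := 0)) = Msum l n m" by (rule Msum_upd)
  have ms2: "Msum l (Suc n) m = Msum l n m + m (Suc n) * Q" unfolding Q_def using Msum_Suc assms(2) .
  have b: "(\<forall>j\<in>{l+1..Suc n}. m j \<le> P j - 1) \<longleftrightarrow>
      (\<forall>j\<in>{l+1..n}. (m(Suc n := 0)) j \<le> P j - 1) \<and> m (Suc n) < p"
  proof -
    have "{l+1..Suc n} = insert (Suc n) {l+1..n}" using assms(2) by auto
    moreover have "m (Suc n) \<le> p - 1 \<longleftrightarrow> m (Suc n) < p" using p3 by auto
    ultimately show ?thesis unfolding p_def by auto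
  qed
  have s: "(\<forall>j. j \<notin> {l+1..Suc n} \<longrightarrow> m j = 0) \<longleftrightarrow>
      (\<forall>j. j \<notin> {l+1..n} \<longrightarrow> (m(Suc n := 0)) j = 0)"
  proof
    assume h: "\<forall>j. j \<notin> {l+1..Suc n} \<longrightarrow> m j = 0"
    show "\<forall>j. j \<notin> {l+1..n} \<longrightarrow> (m(Suc n := 0)) j = 0"
    proof (intro allI impI)
      fix j assume j: "j \<notin> {l+1..n}"
      show "(m(Suc n := 0)) j = 0"
      proof (cases "j = Suc n")
        case False
        then have "j \<notin> {l+1..Suc n}" using j by (simp add: le_Suc_eq)
        then show ?thesis using h False by simp
      qed simp
    qed
  next
    assume h: "\<forall>j. j \<notin> {l+1..n} \<longrightarrow> (m(Suc n := 0)) j = 0"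
    show "\<forall>j. j \<notin> {l+1..Suc n} \<longrightarrow> m j = 0"
    proof (intro allI impI)
      fix j assume j: "j \<notin> {l+1..Suc n}"
      then have "j \<noteq> Suc n" "j \<notin> {l+1..n}" using assms(2) by auto
      then show "m j = 0" using h by (metis fun_upd_other)
    qed
  qed
  have c1: "coprime (a + Msum l (Suc n) m) (primorial (Suc n)) \<longleftrightarrow>
     coprime (a + Msum l n m) Q \<and> \<not> p dvd (a + Msum l n m + m (Suc n) * Q)"
    unfolding coprime_primorial_Suc_iff ms2 p_def Q_def
    by (simp add: add.assoc[symmetric] coprime_add_mult_self)
  have c2: "coprime (a + g + Msum l (Suc n) m) (primorial (Suc n)) \<longleftrightarrow>
     coprime (a + g + Msum l n m) Q \<and> \<not> p dvd (a + Msum l n m + g + m (Suc n) * Q)"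
  proof -
    have e: "a + g + Msum l (Suc n) m = (a + g + Msum l n m) + m (Suc n) * Q" using ms2 by simp
    have e2: "a + g + Msum l n m + m (Suc n) * Q = a + Msum l n m + g + m (Suc n) * Q" by simp
    have d: "p dvd (a + g + Msum l n m + m (Suc n) * Q) \<longleftrightarrow> p dvd (a + Msum l n m + g + m (Suc n) * Q)"
      by (simp only: e2)
    show ?thesis unfolding coprime_primorial_Suc_iff e
      using coprime_add_mult_self[of "a + g + Msum l n m" "m (Suc n)" Q] d
      unfolding p_def Q_def by simp
  qed
  show ?thesis
    unfolding Aset_iff b s c1 c2 ms Q_def
    by auto
qed



lemma Aset_base:
  assumes "coprime a (primorial l)" "coprime (a + g) (primorial l)"
  shows "Aset l l g a = {\<lambda>_. 0}"
proof
  show "Aset l l g a \<subseteq> {\<lambda>_. 0}"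
  proof
    fix m assume "m \<in> Aset l l g a"
    then have "\<forall>j. m j = 0" unfolding Aset_iff by auto
    then show "m \<in> {\<lambda>_. 0}" by auto
  qed
next
  show "{\<lambda>_. 0} \<subseteq> Aset l l g a"
    using assms by (simp add: Aset_iff Msum_def)
qed

lemma Aset_card:
  assumes l1: "1 \<le> l" and lk: "l \<le> k"
    and ca: "coprime a (primorial l)" and cg: "coprime (a + g) (primorial l)"
  shows "finite (Aset l k g a) \<and> card (Aset l k g a) = (\<Prod>i\<in>{l+1..k}. cnt g i)"
  using lk
proof (induction k rule: dec_induct)
  case base
  then show ?case using Aset_base[OF ca cg] by simp
next
  case (step n)
  define p where "p = P (Suc n)"
  define Q where "Q = primorial n"
  define B where "B m = {r\<in>{0..<p}. \<not> p dvd (a + Msum l n m + r*Q) \<and>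
                               \<not> p dvd (a + Msum l n m + g + r*Q)}" for m
  have iff: "m \<in> Aset l (Suc n) g a \<longleftrightarrow> m(Suc n := 0) \<in> Aset l n g a \<and> m (Suc n) \<in> B (m(Suc n := 0))" for m
    unfolding B_def p_def Q_def by (rule Aset_Suc_iff[OF l1 step.hyps(1)])
  have z: "m (Suc n) = 0" if "m \<in> Aset l n g a" for m
    using that unfolding Aset_iff by auto
  have bij: "bij_betw (\<lambda>(m, r). m(Suc n := r)) (Sigma (Aset l n g a) B) (Aset l (Suc n) g a)"
  proof (rule bij_betw_byWitness[where f' = "\<lambda>m. (m(Suc n := 0), m (Suc n))"])
    show "\<forall>x\<in>Sigma (Aset l n g a) B. (\<lambda>m. (m(Suc n := 0), m (Suc n))) ((\<lambda>(m, r). m(Suc n := r)) x) = x"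
    proof
      fix x assume "x \<in> Sigma (Aset l n g a) B"
      then obtain m r where x: "x = (m, r)" "m \<in> Aset l n g a" by auto
      have "m(Suc n := 0) = m" using z[OF x(2)] by (simp add: fun_upd_idem)
      then show "(\<lambda>m. (m(Suc n := 0), m (Suc n))) ((\<lambda>(m, r). m(Suc n := r)) x) = x"
        using x by simp
    qed
    show "\<forall>m\<in>Aset l (Suc n) g a. (\<lambda>(m, r). m(Suc n := r)) ((\<lambda>m. (m(Suc n := 0), m (Suc n))) m) = m"
      by simp
    show "(\<lambda>(m, r). m(Suc n := r)) ` Sigma (Aset l n g a) B \<subseteq> Aset l (Suc n) g a"
    proof
      fix y assume "y \<in> (\<lambda>(m, r). m(Suc n := r)) ` Sigma (Aset l n g a) B"
      then obtain m r where mr: "m \<in> Aset l n g a" "r \<in> B m" "y = m(Suc n := r)" by auto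
      have "m(Suc n := 0) = m" using z[OF mr(1)] by (simp add: fun_upd_idem)
      then show "y \<in> Aset l (Suc n) g a" unfolding iff using mr by simp
    qed
    show "(\<lambda>m. (m(Suc n := 0), m (Suc n))) ` Aset l (Suc n) g a \<subseteq> Sigma (Aset l n g a) B"
      using iff by auto
  qed
  have fin: "finite (Sigma (Aset l n g a) B)"
    using step.IH by (auto simp: B_def)
  have cB: "card (B m) = cnt g (Suc n)" for m
    unfolding B_def cnt_def p_def Q_def
    by (rule count_res[OF P_prime coprime_primorial_P])
  have "card (Aset l (Suc n) g a) = card (Sigma (Aset l n g a) B)"
    using bij_betw_same_card[OF bij] by simp
  also have "\<dots> = (\<Sum>m\<in>Aset l n g a. card (B m))"
    using step.IH by (simp add: B_def)
  also have "\<dots> = card (Aset l n g a) * cnt g (Suc n)" by (simp add: cB)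
  also have "\<dots> = (\<Prod>i\<in>{l+1..Suc n}. cnt g i)"
    using step.IH step.hyps(1) by (simp add: prod.cl_ivl_Suc)
  finally show ?case using bij_betw_finite[OF bij] fin by simp
qed



theorem theorem1:
  fixes g l k a :: nat
  assumes "0 < g" and "1 \<le> l" and "consec_pair l g a" and "l < k"
  shows "real (derived_count l k g a) =
    (\<Prod>i=l+1..k. real (P i) - 2) *
    (\<Prod>i\<in>{i. l+1 \<le> i \<and> i \<le> k \<and> P i dvd g}. (real (P i) - 1) / (real (P i) - 2))"
proof -
  have ca: "coprime a (primorial l)" and cg: "coprime (a + g) (primorial l)"
    using assms(3) unfolding consec_pair_def prospective_prime_def by auto
  have dc: "derived_count l k g a = card (Aset l k g a)"
    by (simp add: derived_count_def Aset_def)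
  have c: "card (Aset l k g a) = (\<Prod>i\<in>{l+1..k}. cnt g i)"
    using Aset_card[OF assms(2) _ ca cg] assms(4) by simp
  have r: "real (cnt g i) = (real (P i) - 2) * (if P i dvd g then (real (P i) - 1) / (real (P i) - 2) else 1)"
    if "i \<in> {l+1..k}" for i
  proof -
    have "3 \<le> P i" using P_ge3 that assms(2) by simp
    then show ?thesis unfolding cnt_def by (auto simp: of_nat_diff)
  qed
  have set: "{i. l+1 \<le> i \<and> i \<le> k \<and> P i dvd g} = {i\<in>{l+1..k}. P i dvd g}" by auto
  have "real (derived_count l k g a) = (\<Prod>i\<in>{l+1..k}. real (cnt g i))"
    unfolding dc c by simp
  also have "\<dots> = (\<Prod>i\<in>{l+1..k}. (real (P i) - 2) * (if P i dvd g then (real (P i) - 1) / (real (P i) - 2) else 1))"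
    using r by (rule prod.cong[OF refl])
  also have "\<dots> = (\<Prod>i=l+1..k. real (P i) - 2) *
      (\<Prod>i\<in>{l+1..k}. (if P i dvd g then (real (P i) - 1) / (real (P i) - 2) else 1))"
    by (rule prod.distrib)
  also have "(\<Prod>i\<in>{l+1..k}. (if P i dvd g then (real (P i) - 1) / (real (P i) - 2) else 1))
      = (\<Prod>i\<in>{i. l+1 \<le> i \<and> i \<le> k \<and> P i dvd g}. (real (P i) - 1) / (real (P i) - 2))"
    unfolding set by (rule prod.inter_filter[symmetric]) simp
  finally show ?thesis .
qed

end
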